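(* Let $(\mathcal{S},\mathcal{A},\tau,\mu_0,\gamma)$ be fixed and let $\beta>0$. For reward functions $R,R'$, let $Q^{H}_{\beta,R}$ and $Q^{H}_{\beta,R'}$ be the corresponding soft $Q$-functions. Then $Q^{H}_{\beta,R}=Q^{H}_{\beta,R'}$ if and only if $R'$ is produced from $R$ by $S'$-redistribution.
   Context: An MDP is a tuple $(\mathcal{S},\mathcal{A},\tau,\mu_0,R,\gamma)$ with finite $\mathcal{S}$, $\mathcal{A}$, transition dynamics $\tau:\mathcal{S}\times\mathcal{A}\to\Delta(\mathcal{S})$, initial distribution $\mu_0$, deterministic reward $R:\mathcal{S}\times\mathcal{A}\times\mathcal{S}\to\mathbb{R}$, and $\gamma\in(0,1)$. For inverse temperature $\beta>0$, the soft $Q$-function $Q^H_\beta$ is the unique function $\mathcal{S}\times\mathcal{A}\to\mathbb{R}$ satisfying $Q^H_\beta(s,a)=\mathbb{E}_{S'\sim\tau(s,a)}\big[R(s,a,S')+\gamma\frac{1}{\beta}\log\sum_{a'\in\mathcal{A}}\exp(\beta Q^H_\beta(S',a'))\big]$ for all $s,a$. Given $\tau$, $R'$ is produced from $R$ by $S'$-redistribution if $\mathbb{E}_{S'\sim\tau(s,a)}[R(s,a,S')]=\mathbb{E}_{S'\sim\tau(s,a)}[R'(s,a,S')]$ for all $s,a$. *)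

theory Defs
  imports "HOL-Probability.Probability"
begin

definition soft_bellman ::
  "('s::finite \<Rightarrow> 'a::finite \<Rightarrow> 's pmf) \<Rightarrow> real \<Rightarrow> real \<Rightarrow>
   ('s \<Rightarrow> 'a \<Rightarrow> 's \<Rightarrow> real) \<Rightarrow> ('s \<Rightarrow> 'a \<Rightarrow> real) \<Rightarrow> bool" where
  "soft_bellman \<tau> \<gamma> \<beta> R Q \<longleftrightarrow>
     (\<forall>s a. Q s a = measure_pmf.expectation (\<tau> s a)
        (\<lambda>s'. R s a s' + \<gamma> * ((1 / \<beta>) * ln (\<Sum>a'\<in>UNIV. exp (\<beta> * Q s' a')))))"

definition soft_Q ::
  "('s::finite \<Rightarrow> 'a::finite \<Rightarrow> 's pmf) \<Rightarrow> real \<Rightarrow> real \<Rightarrow>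
   ('s \<Rightarrow> 'a \<Rightarrow> 's \<Rightarrow> real) \<Rightarrow> ('s \<Rightarrow> 'a \<Rightarrow> real)" where
  "soft_Q \<tau> \<gamma> \<beta> R = (THE Q. soft_bellman \<tau> \<gamma> \<beta> R Q)"

definition S'_redistribution ::
  "('s \<Rightarrow> 'a \<Rightarrow> 's pmf) \<Rightarrow> ('s \<Rightarrow> 'a \<Rightarrow> 's \<Rightarrow> real) \<Rightarrow> ('s \<Rightarrow> 'a \<Rightarrow> 's \<Rightarrow> real) \<Rightarrow> bool" where
  "S'_redistribution \<tau> R R' \<longleftrightarrow>
     (\<forall>s a. measure_pmf.expectation (\<tau> s a) (R s a) = measure_pmf.expectation (\<tau> s a) (R' s a))"

end

theory Submission
  imports Defs
begin

definition Vf :: "real \<Rightarrow> ('s \<Rightarrow> 'a::finite \<Rightarrow> real) \<Rightarrow> 's \<Rightarrow> real" where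
  "Vf \<beta> Q s = (1 / \<beta>) * ln (\<Sum>a'\<in>UNIV. exp (\<beta> * Q s a'))"

definition Tf :: "('s::finite \<Rightarrow> 'a::finite \<Rightarrow> 's pmf) \<Rightarrow> real \<Rightarrow> real \<Rightarrow>
   ('s \<Rightarrow> 'a \<Rightarrow> real) \<Rightarrow> ('s \<Rightarrow> 'a \<Rightarrow> real) \<Rightarrow> ('s \<Rightarrow> 'a \<Rightarrow> real)" where
  "Tf \<tau> \<gamma> \<beta> r Q s a = r s a + \<gamma> * (\<Sum>s'\<in>UNIV. pmf (\<tau> s a) s' * Vf \<beta> Q s')"

definition Df :: "('s::finite \<Rightarrow> 'a::finite \<Rightarrow> real) \<Rightarrow> ('s \<Rightarrow> 'a \<Rightarrow> real) \<Rightarrow> real" where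
  "Df Q Q' = Max (range (\<lambda>p. \<bar>Q (fst p) (snd p) - Q' (fst p) (snd p)\<bar>))"

lemma Df_ge: "\<bar>Q s a - Q' s a\<bar> \<le> Df Q Q'"
  unfolding Df_def
  by (rule Max_ge[OF finite_imageI[OF finite]]) (rule image_eqI[where x="(s,a)"], auto)

lemma Df_le: "(\<And>s a. \<bar>Q s a - Q' s a\<bar> \<le> c) \<Longrightarrow> Df Q Q' \<le> c"
  unfolding Df_def by (subst Max_le_iff) auto

lemma expect_sum:
  fixes M :: "'s::finite pmf"
  shows "measure_pmf.expectation M f = (\<Sum>s'\<in>UNIV. pmf M s' * f s')"
  by (subst integral_measure_pmf[where A=UNIV]) (auto simp: mult.commute)

lemma bellman_iff:
  "soft_bellman \<tau> \<gamma> \<beta> R Q \<longleftrightarrow>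
   (\<forall>s a. Q s a = Tf \<tau> \<gamma> \<beta> (\<lambda>s a. measure_pmf.expectation (\<tau> s a) (R s a)) Q s a)"
  unfolding soft_bellman_def Tf_def Vf_def expect_sum
  by (simp add: distrib_left sum.distrib sum_distrib_left algebra_simps)

lemma Vf_mono:
  assumes "\<beta> > 0" and "\<And>a. Q s a \<le> Q' s a + c"
  shows "Vf \<beta> Q s \<le> Vf \<beta> Q' s + c"
proof -
  have "(\<Sum>a'\<in>UNIV. exp (\<beta> * Q s a')) \<le> (\<Sum>a'\<in>UNIV. exp (\<beta> * c) * exp (\<beta> * Q' s a'))"
  proof (rule sum_mono)
    fix a
    have "\<beta> * Q s a \<le> \<beta> * c + \<beta> * Q' s a" using assms
      by (metis add.commute distrib_left mult_le_cancel_left_pos)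
    then show "exp (\<beta> * Q s a) \<le> exp (\<beta> * c) * exp (\<beta> * Q' s a)"
      by (simp add: exp_add[symmetric])
  qed
  also have "\<dots> = exp (\<beta> * c) * (\<Sum>a'\<in>UNIV. exp (\<beta> * Q' s a'))"
    by (simp add: sum_distrib_left)
  finally have le: "(\<Sum>a'\<in>UNIV. exp (\<beta> * Q s a')) \<le> exp (\<beta> * c) * (\<Sum>a'\<in>UNIV. exp (\<beta> * Q' s a'))" .
  have pos: "(\<Sum>a'\<in>UNIV. exp (\<beta> * Q s a')) > 0"
    by (rule sum_pos) auto
  have pos2: "(\<Sum>a'\<in>UNIV. exp (\<beta> * Q' s a')) > 0"
    by (rule sum_pos) auto
  have "ln (\<Sum>a'\<in>UNIV. exp (\<beta> * Q s a')) \<le> ln (exp (\<beta> * c) * (\<Sum>a'\<in>UNIV. exp (\<beta> * Q' s a')))"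
    using le pos by simp
  also have "\<dots> = \<beta> * c + ln (\<Sum>a'\<in>UNIV. exp (\<beta> * Q' s a'))"
    using pos2 by (simp add: ln_mult)
  finally have "ln (\<Sum>a'\<in>UNIV. exp (\<beta> * Q s a')) \<le> \<beta> * c + ln (\<Sum>a'\<in>UNIV. exp (\<beta> * Q' s a'))" .
  then show ?thesis unfolding Vf_def using assms(1)
    by (simp add: field_simps)
qed

lemma Vf_lip:
  assumes "\<beta> > 0" and "\<And>a. \<bar>Q s a - Q' s a\<bar> \<le> c"
  shows "\<bar>Vf \<beta> Q s - Vf \<beta> Q' s\<bar> \<le> c"
proof -
  have "Vf \<beta> Q s \<le> Vf \<beta> Q' s + c"
    by (rule Vf_mono[OF assms(1)]) (use assms(2) in \<open>smt (verit)\<close>)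
  moreover have "Vf \<beta> Q' s \<le> Vf \<beta> Q s + c"
    by (rule Vf_mono[OF assms(1)]) (use assms(2) in \<open>smt (verit)\<close>)
  ultimately show ?thesis by linarith
qed

lemma Tf_contr:
  assumes "\<beta> > 0" "\<gamma> \<ge> 0" and "\<And>s a. \<bar>Q s a - Q' s a\<bar> \<le> c"
  shows "\<bar>Tf \<tau> \<gamma> \<beta> r Q s a - Tf \<tau> \<gamma> \<beta> r Q' s a\<bar> \<le> \<gamma> * c"
proof -
  have "\<bar>(\<Sum>s'\<in>UNIV. pmf (\<tau> s a) s' * Vf \<beta> Q s') - (\<Sum>s'\<in>UNIV. pmf (\<tau> s a) s' * Vf \<beta> Q' s')\<bar>
      = \<bar>\<Sum>s'\<in>UNIV. pmf (\<tau> s a) s' * (Vf \<beta> Q s' - Vf \<beta> Q' s')\<bar>"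
    by (simp add: sum_subtractf right_diff_distrib)
  also have "\<dots> \<le> (\<Sum>s'\<in>UNIV. \<bar>pmf (\<tau> s a) s' * (Vf \<beta> Q s' - Vf \<beta> Q' s')\<bar>)"
    by (rule sum_abs)
  also have "\<dots> \<le> (\<Sum>s'\<in>UNIV. pmf (\<tau> s a) s' * c)"
    by (rule sum_mono) (auto simp: abs_mult intro!: mult_left_mono Vf_lip assms)
  also have "\<dots> = c"
    by (simp add: sum_distrib_right[symmetric] sum_pmf_eq_1)
  finally show ?thesis
    unfolding Tf_def using assms(2)
    by (simp add: right_diff_distrib[symmetric] abs_mult mult_left_mono)
qed

lemma Tf_Df:
  assumes "\<beta> > 0" "\<gamma> \<ge> 0"
  shows "Df (Tf \<tau> \<gamma> \<beta> r Q) (Tf \<tau> \<gamma> \<beta> r Q') \<le> \<gamma> * Df Q Q'"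
  by (rule Df_le, rule Tf_contr[OF assms], rule Df_ge)


lemma Tf_unique:
  assumes "\<beta> > 0" "0 \<le> \<gamma>" "\<gamma> < 1"
    and "\<forall>s a. Q s a = Tf \<tau> \<gamma> \<beta> r Q s a" "\<forall>s a. Q' s a = Tf \<tau> \<gamma> \<beta> r Q' s a"
  shows "Q = Q'"
proof -
  have eq1: "Tf \<tau> \<gamma> \<beta> r Q = Q" using assms(4) by (intro ext) simp
  have eq2: "Tf \<tau> \<gamma> \<beta> r Q' = Q'" using assms(5) by (intro ext) simp
  have "Df Q Q' \<le> \<gamma> * Df Q Q'" using Tf_Df[OF assms(1,2), of \<tau> r Q Q'] eq1 eq2 by simp
  moreover have "0 \<le> Df Q Q'" using Df_ge[of Q undefined undefined Q'] by linarith
  ultimately have "Df Q Q' \<le> 0" using assms(3)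
    by (smt (verit) mult_le_cancel_right1)
  then have "\<forall>s a. \<bar>Q s a - Q' s a\<bar> \<le> 0" using Df_ge order_trans by blast
  then show ?thesis by (intro ext) simp
qed

lemma Tf_exists:
  assumes "\<beta> > 0" "0 \<le> \<gamma>" "\<gamma> < 1"
  shows "\<exists>Q. \<forall>s a. Q s a = Tf \<tau> \<gamma> \<beta> r Q s a"
proof -
  define T where "T = Tf \<tau> \<gamma> \<beta> r"
  define q where "q n = (T ^^ n) (\<lambda>_ _. 0)" for n
  have qS: "q (Suc n) = T (q n)" for n by (simp add: q_def)
  define d where "d n = Df (q (Suc n)) (q n)" for n
  have dle: "d n \<le> \<gamma> ^ n * d 0" for n
  proof (induction n)
    case 0 then show ?case by simp
  next
    case (Suc n)
    have "d (Suc n) = Df (T (q (Suc n))) (T (q n))" unfolding d_def qS ..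
    also have "\<dots> \<le> \<gamma> * d n" unfolding d_def T_def by (rule Tf_Df[OF assms(1,2)])
    finally have "d (Suc n) \<le> \<gamma> * d n" .
    also have "\<dots> \<le> \<gamma> * (\<gamma> ^ n * d 0)" using Suc assms(2) by (rule mult_left_mono)
    finally show ?case by (simp add: mult.assoc)
  qed
  define L where "L s a = (\<Sum>k. q (Suc k) s a - q k s a)" for s a
  have conv: "(\<lambda>n. q n s a) \<longlonglongrightarrow> L s a" for s a
  proof -
    have "summable (\<lambda>k. q (Suc k) s a - q k s a)"
    proof (rule summable_comparison_test')
      show "summable (\<lambda>k. d 0 * \<gamma> ^ k)"
        using assms by (intro summable_mult summable_geometric) auto
      show "norm (q (Suc k) s a - q k s a) \<le> d 0 * \<gamma> ^ k" for k
        using Df_ge[of "q (Suc k)" s a "q k"] dle[of k] unfolding d_def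
        by (simp add: mult.commute)
    qed
    then have "(\<lambda>n. \<Sum>k<n. q (Suc k) s a - q k s a) \<longlonglongrightarrow> L s a"
      unfolding L_def by (rule summable_LIMSEQ)
    moreover have "(\<Sum>k<n. q (Suc k) s a - q k s a) = q n s a" for n
      by (subst sum_lessThan_telescope) (simp add: q_def)
    ultimately show ?thesis by simp
  qed
  have "\<forall>s a. L s a = T L s a"
  proof (intro allI)
    fix s a
    have "(\<lambda>n. q (Suc n) s a) \<longlonglongrightarrow> L s a" using conv by (rule LIMSEQ_Suc)
    moreover have "(\<lambda>n. q (Suc n) s a) \<longlonglongrightarrow> T L s a"
    proof -
      have pos: "(\<Sum>a'\<in>UNIV. exp (\<beta> * L s' a')) \<noteq> 0" for s'
      proof -
        have "0 < (\<Sum>a'\<in>UNIV. exp (\<beta> * L s' a'))" by (rule sum_pos) auto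
        then show ?thesis by simp
      qed
      have "(\<lambda>n. T (q n) s a) \<longlonglongrightarrow> T L s a"
        unfolding T_def Tf_def Vf_def
        by (intro tendsto_intros conv pos)
      then show ?thesis by (simp add: qS)
    qed
    ultimately show "L s a = T L s a" by (rule LIMSEQ_unique)
  qed
  then show ?thesis unfolding T_def by blast
qed

theorem theorem3p2:
  fixes \<tau> :: "'s::finite \<Rightarrow> 'a::finite \<Rightarrow> 's pmf"
    and \<mu>0 :: "'s pmf"
    and \<gamma> \<beta> :: real
    and R R' :: "'s \<Rightarrow> 'a \<Rightarrow> 's \<Rightarrow> real"
  assumes "0 < \<gamma>" and "\<gamma> < 1" and "0 < \<beta>"
  shows "soft_Q \<tau> \<gamma> \<beta> R = soft_Q \<tau> \<gamma> \<beta> R' \<longleftrightarrow> S'_redistribution \<tau> R R'"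
proof
  define r where "r = (\<lambda>s a. measure_pmf.expectation (\<tau> s a) (R s a))"
  define r' where "r' = (\<lambda>s a. measure_pmf.expectation (\<tau> s a) (R' s a))"
  have g: "0 \<le> \<gamma>" using assms by simp
  have solQ: "soft_bellman \<tau> \<gamma> \<beta> X (soft_Q \<tau> \<gamma> \<beta> X)" for X
  proof -
    obtain Q where Q: "\<forall>s a. Q s a = Tf \<tau> \<gamma> \<beta> (\<lambda>s a. measure_pmf.expectation (\<tau> s a) (X s a)) Q s a"
      using Tf_exists[OF assms(3) g assms(2)] by blast
    have "\<exists>!Q. soft_bellman \<tau> \<gamma> \<beta> X Q"
      unfolding bellman_iff using Q Tf_unique[OF assms(3) g assms(2)] by blast
    then show ?thesis unfolding soft_Q_def by (rule theI')
  qed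
  assume eq: "soft_Q \<tau> \<gamma> \<beta> R = soft_Q \<tau> \<gamma> \<beta> R'"
  let ?Q = "soft_Q \<tau> \<gamma> \<beta> R"
  have 1: "\<forall>s a. ?Q s a = Tf \<tau> \<gamma> \<beta> r ?Q s a" using solQ[of R] unfolding bellman_iff r_def .
  have 2: "\<forall>s a. ?Q s a = Tf \<tau> \<gamma> \<beta> r' ?Q s a" using solQ[of R'] unfolding bellman_iff r'_def eq .
  show "S'_redistribution \<tau> R R'"
    unfolding S'_redistribution_def
  proof (intro allI)
    fix s a
    show "measure_pmf.expectation (\<tau> s a) (R s a) = measure_pmf.expectation (\<tau> s a) (R' s a)"
    proof -
      have a: "?Q s a = Tf \<tau> \<gamma> \<beta> r ?Q s a" using 1 by blast
      have b: "?Q s a = Tf \<tau> \<gamma> \<beta> r' ?Q s a" using 2 by blast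
      have "r s a = r' s a" using a b unfolding Tf_def by linarith
      then show ?thesis unfolding r_def r'_def by simp
    qed
  qed
next
  assume "S'_redistribution \<tau> R R'"
  then have "(\<lambda>s a. measure_pmf.expectation (\<tau> s a) (R s a)) = (\<lambda>s a. measure_pmf.expectation (\<tau> s a) (R' s a))"
    unfolding S'_redistribution_def by (intro ext) simp
  then have "soft_bellman \<tau> \<gamma> \<beta> R = soft_bellman \<tau> \<gamma> \<beta> R'"
    by (intro ext) (simp only: bellman_iff)
  then show "soft_Q \<tau> \<gamma> \<beta> R = soft_Q \<tau> \<gamma> \<beta> R'" unfolding soft_Q_def by simp
qed

end
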